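(* Let $V$ be a vertex operator algebra. Any $C_1$-cofinite $\mathbb N$-gradable weak $V$-module is finitely generated.
   Context: A weak $V$-module $W$ is $\mathbb N$-gradable if there is a grading $W=\bigoplus_{n\in\mathbb N}W(n)$ with $v_mW(n)\subseteq W(\mathrm{wt}\,v+n-m-1)$ for homogeneous $v\in V$ and all $m\in\mathbb Z$ (where $Y_W(v,x)=\sum_m v_mx^{-m-1}$). $C_1(W)=\mathrm{span}\{v_{-1}w: v\in\bigoplus_{n\ge1}V_{(n)},\ w\in W\}$, and $W$ is $C_1$-cofinite if $\dim W/C_1(W)<\infty$. *)

theory Defs
  imports Complex_Main
begin

text \<open>Vector spaces over the complex numbers are modelled as a type of class
ab_group_add together with an explicit scalar multiplication sc satisfying the
library locale Vector_Spaces.vector_space.  Vertex operators are given by their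
modes: Y v n u is the coefficient v_n u of x^(-n-1) in Y(v,x)u.\<close>

text \<open>Sum of a finitely supported family (all sums below are finite by truncation).\<close>
definition fsum :: "(nat \<Rightarrow> 'a::comm_monoid_add) \<Rightarrow> 'a" where
  "fsum f = sum f {i. f i \<noteq> 0}"

definition modes_linear ::
  "(complex \<Rightarrow> 'v::ab_group_add \<Rightarrow> 'v) \<Rightarrow> (complex \<Rightarrow> 'w::ab_group_add \<Rightarrow> 'w)
   \<Rightarrow> ('v \<Rightarrow> int \<Rightarrow> 'w \<Rightarrow> 'w) \<Rightarrow> bool" where
  "modes_linear sc scW YW \<longleftrightarrow>
     (\<forall>v n. Vector_Spaces.linear scW scW (YW v n)) \<and>
     (\<forall>n w. Vector_Spaces.linear sc scW (\<lambda>v. YW v n w))"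

definition truncation :: "('v \<Rightarrow> int \<Rightarrow> 'w \<Rightarrow> 'w::zero) \<Rightarrow> bool" where
  "truncation YW \<longleftrightarrow> (\<forall>v w. \<exists>N. \<forall>n\<ge>N. YW v n w = 0)"

definition borcherds ::
  "(complex \<Rightarrow> 'w::ab_group_add \<Rightarrow> 'w) \<Rightarrow> ('v \<Rightarrow> int \<Rightarrow> 'v \<Rightarrow> 'v)
   \<Rightarrow> ('v \<Rightarrow> int \<Rightarrow> 'w \<Rightarrow> 'w) \<Rightarrow> bool" where
  "borcherds scW Y YW \<longleftrightarrow>
    (\<forall>u v w p q r.
      fsum (\<lambda>i::nat. scW ((of_int p :: complex) gchoose i)
                        (YW (Y u (r + int i) v) (p + q - int i) w))
    = fsum (\<lambda>i::nat. scW ((-1) ^ i * ((of_int r :: complex) gchoose i))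
                        (YW u (p + r - int i) (YW v (q + int i) w)
                         - scW ((-1 :: complex) powi r)
                              (YW v (q + r - int i) (YW u (p + int i) w)))))"

text \<open>The weight space V_(n): the eigenspace of L(0) = omega_1 for the eigenvalue n.\<close>
definition wt_space ::
  "(complex \<Rightarrow> 'v::ab_group_add \<Rightarrow> 'v) \<Rightarrow> ('v \<Rightarrow> int \<Rightarrow> 'v \<Rightarrow> 'v) \<Rightarrow> 'v \<Rightarrow> int \<Rightarrow> 'v set" where
  "wt_space sc Y \<omega> n = {v. Y \<omega> 1 v = sc (of_int n) v}"

text \<open>Vertex operator algebra (V, Y, 1, omega) of central charge c over the complex
numbers, in the sense of Frenkel-Lepowsky-Meurman / Lepowsky-Li.
L(n) = omega_{n+1}.\<close>
definition vertex_operator_algebra ::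
  "(complex \<Rightarrow> 'v::ab_group_add \<Rightarrow> 'v) \<Rightarrow> ('v \<Rightarrow> int \<Rightarrow> 'v \<Rightarrow> 'v) \<Rightarrow> 'v \<Rightarrow> 'v \<Rightarrow> complex \<Rightarrow> bool" where
  "vertex_operator_algebra sc Y vac \<omega> c \<longleftrightarrow>
     Vector_Spaces.vector_space sc \<and>
     modes_linear sc sc Y \<and>
     \<comment> \<open>V is the direct sum of the L(0)-eigenspaces V_(n), n integer\<close>
     (\<forall>v. v \<in> module.span sc (\<Union>n. wt_space sc Y \<omega> n)) \<and>
     \<comment> \<open>each V_(n) is finite dimensional\<close>
     (\<forall>n. \<exists>B. finite B \<and> wt_space sc Y \<omega> n \<subseteq> module.span sc B) \<and>
     \<comment> \<open>V_(n) = 0 for n sufficiently negative\<close>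
     (\<exists>N. \<forall>n<N. wt_space sc Y \<omega> n = {0}) \<and>
     truncation Y \<and>
     \<comment> \<open>vacuum property Y(1,x) = id\<close>
     (\<forall>n w. Y vac n w = (if n = -1 then w else 0)) \<and>
     \<comment> \<open>creation property\<close>
     (\<forall>v. Y v (-1) vac = v \<and> (\<forall>n\<ge>0. Y v n vac = 0)) \<and>
     borcherds sc Y Y \<and>
     \<omega> \<in> wt_space sc Y \<omega> 2 \<and>
     \<comment> \<open>Virasoro relations\<close>
     (\<forall>m n v. Y \<omega> (m + 1) (Y \<omega> (n + 1) v) - Y \<omega> (n + 1) (Y \<omega> (m + 1) v)
        = sc (of_int (m - n)) (Y \<omega> (m + n + 1) v)
          + (if m + n = 0 then sc ((of_int m ^ 3 - of_int m) / 12 * c) v else 0)) \<and>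
     \<comment> \<open>L(-1)-derivative property: Y(L(-1)v,x) = d/dx Y(v,x)\<close>
     (\<forall>v n w. Y (Y \<omega> 0 v) n w = sc (- of_int n) (Y v (n - 1) w))"

definition weak_module ::
  "(complex \<Rightarrow> 'v::ab_group_add \<Rightarrow> 'v) \<Rightarrow> ('v \<Rightarrow> int \<Rightarrow> 'v \<Rightarrow> 'v) \<Rightarrow> 'v
   \<Rightarrow> (complex \<Rightarrow> 'w::ab_group_add \<Rightarrow> 'w) \<Rightarrow> ('v \<Rightarrow> int \<Rightarrow> 'w \<Rightarrow> 'w) \<Rightarrow> bool" where
  "weak_module sc Y vac scW YW \<longleftrightarrow>
     Vector_Spaces.vector_space scW \<and>
     modes_linear sc scW YW \<and>
     truncation YW \<and>
     (\<forall>n w. YW vac n w = (if n = -1 then w else 0)) \<and>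
     borcherds scW Y YW"

definition nat_direct_sum :: "(complex \<Rightarrow> 'w::ab_group_add \<Rightarrow> 'w) \<Rightarrow> (nat \<Rightarrow> 'w set) \<Rightarrow> bool" where
  "nat_direct_sum scW G \<longleftrightarrow>
     (\<forall>n. module.subspace scW (G n)) \<and>
     (\<forall>w. w \<in> module.span scW (\<Union>n. G n)) \<and>
     (\<forall>f. finite {n. f n \<noteq> 0} \<longrightarrow> (\<forall>n. f n \<in> G n) \<longrightarrow> sum f {n. f n \<noteq> 0} = 0
          \<longrightarrow> (\<forall>n. f n = 0))"

definition N_gradable ::
  "(complex \<Rightarrow> 'v::ab_group_add \<Rightarrow> 'v) \<Rightarrow> ('v \<Rightarrow> int \<Rightarrow> 'v \<Rightarrow> 'v) \<Rightarrow> 'v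
   \<Rightarrow> (complex \<Rightarrow> 'w::ab_group_add \<Rightarrow> 'w) \<Rightarrow> ('v \<Rightarrow> int \<Rightarrow> 'w \<Rightarrow> 'w) \<Rightarrow> bool" where
  "N_gradable sc Y \<omega> scW YW \<longleftrightarrow>
     (\<exists>G :: nat \<Rightarrow> 'w set. nat_direct_sum scW G \<and>
        (\<forall>v k n m w. v \<in> wt_space sc Y \<omega> k \<longrightarrow> w \<in> G n \<longrightarrow>
            YW v m w \<in> (if k + int n - m - 1 \<ge> 0 then G (nat (k + int n - m - 1)) else {0})))"

definition C1 ::
  "(complex \<Rightarrow> 'v::ab_group_add \<Rightarrow> 'v) \<Rightarrow> ('v \<Rightarrow> int \<Rightarrow> 'v \<Rightarrow> 'v) \<Rightarrow> 'v
   \<Rightarrow> (complex \<Rightarrow> 'w::ab_group_add \<Rightarrow> 'w) \<Rightarrow> ('v \<Rightarrow> int \<Rightarrow> 'w \<Rightarrow> 'w) \<Rightarrow> 'w set" where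
  "C1 sc Y \<omega> scW YW =
     module.span scW {YW v (-1) w | v w.
        v \<in> module.span sc (\<Union>n\<in>{1..}. wt_space sc Y \<omega> n)}"

text \<open>dim W / C_1(W) is finite: finitely many vectors span W modulo C_1(W).\<close>
definition C1_cofinite ::
  "(complex \<Rightarrow> 'v::ab_group_add \<Rightarrow> 'v) \<Rightarrow> ('v \<Rightarrow> int \<Rightarrow> 'v \<Rightarrow> 'v) \<Rightarrow> 'v
   \<Rightarrow> (complex \<Rightarrow> 'w::ab_group_add \<Rightarrow> 'w) \<Rightarrow> ('v \<Rightarrow> int \<Rightarrow> 'w \<Rightarrow> 'w) \<Rightarrow> bool" where
  "C1_cofinite sc Y \<omega> scW YW \<longleftrightarrow>
     (\<exists>S. finite S \<and> module.span scW (S \<union> C1 sc Y \<omega> scW YW) = UNIV)"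

definition submodule ::
  "(complex \<Rightarrow> 'w::ab_group_add \<Rightarrow> 'w) \<Rightarrow> ('v \<Rightarrow> int \<Rightarrow> 'w \<Rightarrow> 'w) \<Rightarrow> 'w set \<Rightarrow> bool" where
  "submodule scW YW U \<longleftrightarrow> module.subspace scW U \<and> (\<forall>v n w. w \<in> U \<longrightarrow> YW v n w \<in> U)"

definition generated_submodule ::
  "(complex \<Rightarrow> 'w::ab_group_add \<Rightarrow> 'w) \<Rightarrow> ('v \<Rightarrow> int \<Rightarrow> 'w \<Rightarrow> 'w) \<Rightarrow> 'w set \<Rightarrow> 'w set" where
  "generated_submodule scW YW S = \<Inter>{U. submodule scW YW U \<and> S \<subseteq> U}"

definition finitely_generated ::
  "(complex \<Rightarrow> 'w::ab_group_add \<Rightarrow> 'w) \<Rightarrow> ('v \<Rightarrow> int \<Rightarrow> 'w \<Rightarrow> 'w) \<Rightarrow> bool" where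
  "finitely_generated scW YW \<longleftrightarrow> (\<exists>S. finite S \<and> generated_submodule scW YW S = UNIV)"

end

theory Submission
  imports Defs
begin

context module
begin

lemma span_Union_decomp:
  assumes "x \<in> span (\<Union>m. A m)"
  shows "\<exists>f F. finite F \<and> (\<forall>m. f m \<in> span (A m)) \<and> (\<forall>m. m \<notin> F \<longrightarrow> f m = 0) \<and> x = sum f F"
  using assms
proof (induction rule: span_induct_alt)
  case base
  show ?case by (intro exI[of _ "\<lambda>_. 0"] exI[of _ "{}"]) (auto simp: span_zero)
next
  case (step c x y)
  then obtain f F where fF: "finite F" "\<forall>m. f m \<in> span (A m)" "\<forall>m. m \<notin> F \<longrightarrow> f m = 0" "y = sum f F"
    by blast
  from step(1) obtain m0 where m0: "x \<in> A m0" by blast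
  define f' where "f' = f(m0 := c *s x + f m0)"
  have 1: "\<forall>m. f' m \<in> span (A m)"
  proof
    fix m
    show "f' m \<in> span (A m)"
      using fF(2) span_add[OF span_scale[OF span_base[OF m0]] fF(2)[rule_format, of m0]]
      by (auto simp: f'_def)
  qed
  have 2: "\<forall>m. m \<notin> insert m0 F \<longrightarrow> f' m = 0" using fF(3) by (auto simp: f'_def)
  have "sum f' (insert m0 F) = f' m0 + sum f' (F - {m0})"
    using fF(1) by (simp add: sum.insert_remove)
  also have "sum f' (F - {m0}) = sum f (F - {m0})"
    by (rule sum.cong) (auto simp: f'_def)
  also have "f' m0 + sum f (F - {m0}) = c *s x + (f m0 + sum f (F - {m0}))"
    by (simp add: f'_def add.assoc)
  also have "f m0 + sum f (F - {m0}) = sum f (insert m0 F)"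
    using fF(1) by (simp add: sum.insert_remove)
  also have "sum f (insert m0 F) = sum f F"
    using fF(1,3) by (cases "m0 \<in> F") (auto simp: insert_absorb)
  finally have "c *s x + y = sum f' (insert m0 F)" using fF(4) by simp
  then show ?case using 1 2 fF(1) by (intro exI[of _ f'] exI[of _ "insert m0 F"]) auto
qed

lemma graded_span_component:
  fixes G :: "nat \<Rightarrow> 'b set"
  assumes indep: "\<forall>f. finite {n. f n \<noteq> 0} \<longrightarrow> (\<forall>n. f n \<in> G n) \<longrightarrow> sum f {n. f n \<noteq> 0} = 0
          \<longrightarrow> (\<forall>n. f n = 0)"
    and subs: "\<forall>n. subspace (G n)"
    and AG: "\<forall>m. A m \<subseteq> G m"
    and sp: "span (\<Union>m. A m) = UNIV"
    and w: "w \<in> G n"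
  shows "w \<in> span (A n)"
proof -
  obtain f F where fF: "finite F" "\<forall>m. f m \<in> span (A m)" "\<forall>m. m \<notin> F \<longrightarrow> f m = 0" "w = sum f F"
    using span_Union_decomp[of w A] sp by blast
  define g where "g m = f m - (if m = n then w else 0)" for m
  have gG: "\<forall>m. g m \<in> G m"
  proof
    fix m
    have "f m \<in> G m" using fF(2) span_minimal[OF AG[rule_format, of m] subs[rule_format, of m]] by blast
    then show "g m \<in> G m" using w subs by (auto simp: g_def intro: subspace_diff subspace_0)
  qed
  have supp: "{m. g m \<noteq> 0} \<subseteq> insert n F" using fF(3) by (auto simp: g_def)
  have fin: "finite {m. g m \<noteq> 0}" using supp fF(1) finite_subset by blast
  have "sum g {m. g m \<noteq> 0} = sum g (insert n F)"
    using supp fF(1) by (intro sum.mono_neutral_left) auto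
  also have "\<dots> = sum f (insert n F) - sum (\<lambda>m. if m = n then w else 0) (insert n F)"
    by (simp add: g_def sum_subtractf)
  also have "sum f (insert n F) = sum f F"
    using fF(1,3) by (cases "n \<in> F") (auto simp: insert_absorb)
  also have "sum (\<lambda>m. if m = n then w else 0) (insert n F) = w"
    using fF(1) by (simp add: sum.delta)
  finally have "sum g {m. g m \<noteq> 0} = 0" using fF(4) by simp
  with indep fin gG have "\<forall>m. g m = 0" by blast
  then have "f n = w" by (auto simp: g_def dest: spec[of _ n])
  then show ?thesis using fF(2) by metis
qed

end

theorem proposition2:
  fixes sc :: "complex \<Rightarrow> 'v::ab_group_add \<Rightarrow> 'v"
    and Y :: "'v \<Rightarrow> int \<Rightarrow> 'v \<Rightarrow> 'v"
    and vac \<omega> :: 'v and c :: complex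
    and scW :: "complex \<Rightarrow> 'w::ab_group_add \<Rightarrow> 'w"
    and YW :: "'v \<Rightarrow> int \<Rightarrow> 'w \<Rightarrow> 'w"
  assumes "vertex_operator_algebra sc Y vac \<omega> c"
    and "weak_module sc Y vac scW YW"
    and "N_gradable sc Y \<omega> scW YW"
    and "C1_cofinite sc Y \<omega> scW YW"
  shows "finitely_generated scW YW"
proof -
  have vsV: "vector_space sc" using assms(1) by (simp add: vertex_operator_algebra_def)
  have vsW: "vector_space scW" and ml: "modes_linear sc scW YW"
    using assms(2) by (auto simp: weak_module_def)
  interpret V: module sc using vsV by (simp add: module_iff_vector_space)
  interpret W: module scW using vsW by (simp add: module_iff_vector_space)
  have hom1: "module_hom scW scW (YW v n)" for v n
    using ml by (simp add: modes_linear_def module_hom_iff_linear)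
  have hom2: "module_hom sc scW (\<lambda>v. YW v n w)" for n w
    using ml by (simp add: modes_linear_def module_hom_iff_linear)
  obtain G where dsgr: "nat_direct_sum scW G \<and> (\<forall>v k n m w. v \<in> wt_space sc Y \<omega> k \<longrightarrow> w \<in> G n \<longrightarrow>
            YW v m w \<in> (if k + int n - m - 1 \<ge> 0 then G (nat (k + int n - m - 1)) else {0}))"
    using assms(3) unfolding N_gradable_def by (rule exE)
  have ds: "nat_direct_sum scW G" using dsgr by (rule conjunct1)
  have gr: "\<forall>v k n m w. v \<in> wt_space sc Y \<omega> k \<longrightarrow> w \<in> G n \<longrightarrow>
            YW v m w \<in> (if k + int n - m - 1 \<ge> 0 then G (nat (k + int n - m - 1)) else {0})"
    using dsgr by (rule conjunct2)
  have subs: "\<forall>n. W.subspace (G n)"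
    using ds unfolding nat_direct_sum_def by (rule conjunct1)
  have spG: "\<forall>w. w \<in> W.span (\<Union>n. G n)"
    using ds unfolding nat_direct_sum_def by (elim conjE)
  have indep: "\<forall>f. finite {n. f n \<noteq> 0} \<longrightarrow> (\<forall>n. f n \<in> G n) \<longrightarrow> sum f {n. f n \<noteq> 0} = 0
          \<longrightarrow> (\<forall>n. f n = 0)"
    using ds unfolding nat_direct_sum_def by (elim conjE)
  obtain S where finS: "finite S" and spS: "W.span (S \<union> C1 sc Y \<omega> scW YW) = UNIV"
    using assms(4) unfolding C1_cofinite_def by blast
  have "\<forall>s\<in>S. \<exists>T. finite T \<and> T \<subseteq> (\<Union>n. G n) \<and> s \<in> W.span T"
  proof
    fix s assume "s \<in> S"
    have "s \<in> W.span (\<Union>n. G n)" using spG by blast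
    then obtain t r where t: "finite t" "t \<subseteq> (\<Union>n. G n)" "s = (\<Sum>a\<in>t. scW (r a) a)"
      unfolding W.span_explicit by auto
    have "s \<in> W.span t" unfolding t(3)
      by (intro W.span_sum W.span_scale W.span_base)
    then show "\<exists>T. finite T \<and> T \<subseteq> (\<Union>n. G n) \<and> s \<in> W.span T" using t by blast
  qed
  from bchoice[OF this] obtain T where T0: "\<forall>s\<in>S. finite (T s) \<and> T s \<subseteq> (\<Union>n. G n) \<and> s \<in> W.span (T s)"
    by blast
  have T: "\<And>s. s \<in> S \<Longrightarrow> finite (T s) \<and> T s \<subseteq> (\<Union>n. G n) \<and> s \<in> W.span (T s)"
    using T0 by blast
  define S' where "S' = (\<Union>s\<in>S. T s)"
  have finS': "finite S'" using finS T by (auto simp: S'_def)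
  have S'G: "S' \<subseteq> (\<Union>n. G n)" using T by (auto simp: S'_def)
  have SS': "S \<subseteq> W.span S'"
  proof
    fix s assume "s \<in> S"
    then have "s \<in> W.span (T s)" "T s \<subseteq> S'" using T by (auto simp: S'_def)
    then show "s \<in> W.span S'" using W.span_mono by blast
  qed
  define B where "B m = {YW v (-1) u | v u k. k \<ge> 1 \<and> v \<in> wt_space sc Y \<omega> k \<and> nat k \<le> m \<and> u \<in> G (m - nat k)}" for m
  define A where "A m = (S' \<inter> G m) \<union> B m" for m
  have BG: "B m \<subseteq> G m" for m
  proof
    fix x assume "x \<in> B m"
    then obtain v u k where x: "x = YW v (-1) u" "k \<ge> 1" "v \<in> wt_space sc Y \<omega> k" "nat k \<le> m" "u \<in> G (m - nat k)"
      by (auto simp: B_def)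
    have e: "k + int (m - nat k) - (-1) - 1 = int m" using x(2,4) by linarith
    have mem: "YW v (-1) u \<in> (if k + int (m - nat k) - (-1) - 1 \<ge> 0 then G (nat (k + int (m - nat k) - (-1) - 1)) else {0})"
      using gr x(3) x(5) by blast
    show "x \<in> G m" using mem x(1) unfolding e by simp
  qed
  have AG: "\<forall>m. A m \<subseteq> G m" using BG by (auto simp: A_def)
  have C1B: "C1 sc Y \<omega> scW YW \<subseteq> W.span (\<Union>m. B m)"
    unfolding C1_def
  proof (rule W.span_minimal)
    show "W.subspace (W.span (\<Union>m. B m))" by simp
    show "{YW v (-1) w | v w. v \<in> V.span (\<Union>n\<in>{1..}. wt_space sc Y \<omega> n)} \<subseteq> W.span (\<Union>m. B m)"
    proof clarify
      fix v w assume v: "v \<in> V.span (\<Union>n\<in>{1..}. wt_space sc Y \<omega> n)"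
      have "V.span (\<Union>n\<in>{1..}. wt_space sc Y \<omega> n) \<subseteq> (\<lambda>v. YW v (-1) w) -` W.span (\<Union>m. B m)"
      proof (rule V.span_minimal)
        show "V.subspace ((\<lambda>v. YW v (-1) w) -` W.span (\<Union>m. B m))"
          by (rule module_hom.subspace_vimage[OF hom2]) simp
        show "(\<Union>n\<in>{1..}. wt_space sc Y \<omega> n) \<subseteq> (\<lambda>v. YW v (-1) w) -` W.span (\<Union>m. B m)"
        proof (rule subsetI)
          fix v assume "v \<in> (\<Union>n\<in>{1..}. wt_space sc Y \<omega> n)"
          then obtain k where k: "k \<in> {1..}" and v: "v \<in> wt_space sc Y \<omega> k" by blast
          have "W.span (\<Union>n. G n) \<subseteq> YW v (-1) -` W.span (\<Union>m. B m)"
          proof (rule W.span_minimal)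
            show "W.subspace (YW v (-1) -` W.span (\<Union>m. B m))"
              by (rule module_hom.subspace_vimage[OF hom1]) simp
            show "(\<Union>n. G n) \<subseteq> YW v (-1) -` W.span (\<Union>m. B m)"
            proof (rule subsetI)
              fix u assume "u \<in> (\<Union>n. G n)"
              then obtain n where u: "u \<in> G n" by blast
              have "YW v (-1) u \<in> B (n + nat k)"
                unfolding B_def using k v u by (intro CollectI exI[of _ v] exI[of _ u] exI[of _ k]) auto
              then have "YW v (-1) u \<in> W.span (\<Union>m. B m)" by (blast intro: W.span_base)
              then show "u \<in> YW v (-1) -` W.span (\<Union>m. B m)" by simp
            qed
          qed
          then show "v \<in> (\<lambda>v. YW v (-1) w) -` W.span (\<Union>m. B m)" using spG by auto
        qed
      qed
      then show "YW v (-1) w \<in> W.span (\<Union>m. B m)" using v by blast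
    qed
  qed
  have spA: "W.span (\<Union>m. A m) = UNIV"
  proof -
    have "S' \<subseteq> (\<Union>m. A m)" using S'G by (auto simp: A_def)
    then have "S \<subseteq> W.span (\<Union>m. A m)" using SS' W.span_mono by blast
    moreover have "C1 sc Y \<omega> scW YW \<subseteq> W.span (\<Union>m. A m)"
      using C1B W.span_mono[of "\<Union>m. B m" "\<Union>m. A m"] by (auto simp: A_def)
    ultimately have "W.span (S \<union> C1 sc Y \<omega> scW YW) \<subseteq> W.span (\<Union>m. A m)"
      by (intro W.span_minimal) auto
    then show ?thesis using spS by auto
  qed
  define U where "U = generated_submodule scW YW S'"
  have Usub: "W.subspace U" and Ucl: "\<And>v n w. w \<in> U \<Longrightarrow> YW v n w \<in> U" and S'U: "S' \<subseteq> U"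
    unfolding U_def generated_submodule_def submodule_def
    by (auto intro!: W.subspace_Inter)
  have GU: "G n \<subseteq> U" for n
  proof (induction n rule: less_induct)
    case (less n)
    have "A n \<subseteq> U"
    proof
      fix x assume "x \<in> A n"
      then consider "x \<in> S'" | "x \<in> B n" by (auto simp: A_def)
      then show "x \<in> U"
      proof cases
        case 1 then show ?thesis using S'U by blast
      next
        case 2
        then obtain v u k where x: "x = YW v (-1) u" "k \<ge> 1" "nat k \<le> n" "u \<in> G (n - nat k)"
          by (auto simp: B_def)
        have "n - nat k < n" using x(2,3) by linarith
        then have "u \<in> U" using less x(4) by blast
        then show ?thesis using Ucl x(1) by blast
      qed
    qed
    then have "W.span (A n) \<subseteq> U" using Usub by (rule W.span_minimal)
    moreover have "G n \<subseteq> W.span (A n)"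
      using W.graded_span_component[OF indep subs AG spA] by blast
    ultimately show ?case by blast
  qed
  have "W.span (\<Union>n. G n) \<subseteq> U" using GU Usub by (intro W.span_minimal) auto
  then have "U = UNIV" using spG by blast
  then show ?thesis using finS' unfolding finitely_generated_def U_def by blast
qed

end
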